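(* With the notation of the context, if $r=\min_h d_h=2$, then the asymptotic threshold satisfies $$G^*(\mathcal C,\boldsymbol\Lambda)\le\frac{k}{2\mathcal B_2},\qquad \mathcal B_2=\sum_{h:\,d_h=2}\Lambda_hB^{(h)}_2,$$ where $B^{(h)}_2$ is the number of weight-2 codewords of $\mathscr C_h$. In particular, for IRSA ($k=1$, $\mathscr C_h$ the length-$h$ repetition code) $G^*(\mathcal C,\boldsymbol\Lambda)\le 1/(2\Lambda_2)$.
   Context: For $h=1,\dots,\theta$, $\mathscr C_h$ is an $(n_h,k)$ binary linear code with minimum distance $d_h\ge2$ and no idle symbols, chosen with probability $\Lambda_h$; $\bar n=\sum_h\Lambda_hn_h$, $R=k/\bar n$. Un-normalized information function $\tilde e^{(h)}_g$: sum over all $g$-subsets of columns of a generator matrix of $\mathscr C_h$ of the rank of the corresponding submatrix ($\tilde e_0=0$). For $G\ge0$ define the recursion $p_\ell=1-\exp\{-\frac{G}{k}\sum_h\Lambda_h\sum_{t=0}^{n_h-1}p_{\ell-1}^t(1-p_{\ell-1})^{n_h-1-t}[(n_h-t)\tilde e^{(h)}_{n_h-t}-(t+1)\tilde e^{(h)}_{n_h-1-t}]\}$, $p_0=1-e^{-G/R}$. The asymptotic threshold is $G^*(\mathcal C,\boldsymbol\Lambda)=\sup\{G\ge0: p_\ell\to0\text{ as }\ell\to\infty\}$. *)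

theory Defs
  imports Complex_Main
begin

text \<open>Binary linear codes are given by a generator matrix over GF(2), represented as a
  Boolean function g :: nat => nat => bool, where g i j is the entry in row i (i < k) and
  column j (j < n).  Addition in GF(2) is XOR, so a GF(2)-sum of bits is the parity of the
  number of ones.\<close>

definition gf2_sum :: "nat set \<Rightarrow> (nat \<Rightarrow> bool) \<Rightarrow> bool" where
  "gf2_sum S f = odd (card {i \<in> S. f i})"

definition codeword :: "nat \<Rightarrow> (nat \<Rightarrow> nat \<Rightarrow> bool) \<Rightarrow> nat set \<Rightarrow> (nat \<Rightarrow> bool)" where
  "codeword n g S = (\<lambda>j. j < n \<and> gf2_sum S (\<lambda>i. g i j))"

definition code :: "nat \<Rightarrow> nat \<Rightarrow> (nat \<Rightarrow> nat \<Rightarrow> bool) \<Rightarrow> (nat \<Rightarrow> bool) set" where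
  "code n k g = {codeword n g S | S. S \<subseteq> {..<k}}"

definition hweight :: "nat \<Rightarrow> (nat \<Rightarrow> bool) \<Rightarrow> nat" where
  "hweight n c = card {j. j < n \<and> c j}"

definition is_generator :: "nat \<Rightarrow> nat \<Rightarrow> (nat \<Rightarrow> nat \<Rightarrow> bool) \<Rightarrow> bool" where
  "is_generator n k g \<longleftrightarrow>
     (\<forall>S. S \<subseteq> {..<k} \<and> S \<noteq> {} \<longrightarrow> (\<exists>j<n. gf2_sum S (\<lambda>i. g i j)))"

definition no_idle :: "nat \<Rightarrow> nat \<Rightarrow> (nat \<Rightarrow> nat \<Rightarrow> bool) \<Rightarrow> bool" where
  "no_idle n k g \<longleftrightarrow> (\<forall>j<n. \<exists>i<k. g i j)"

definition min_dist :: "nat \<Rightarrow> nat \<Rightarrow> (nat \<Rightarrow> nat \<Rightarrow> bool) \<Rightarrow> nat" where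
  "min_dist n k g = Min {hweight n c | c. c \<in> code n k g \<and> c \<noteq> (\<lambda>_. False)}"

definition B2 :: "nat \<Rightarrow> nat \<Rightarrow> (nat \<Rightarrow> nat \<Rightarrow> bool) \<Rightarrow> nat" where
  "B2 n k g = card {c \<in> code n k g. hweight n c = 2}"

definition cols_indep :: "nat \<Rightarrow> (nat \<Rightarrow> nat \<Rightarrow> bool) \<Rightarrow> nat set \<Rightarrow> bool" where
  "cols_indep k g T \<longleftrightarrow>
     (\<forall>T'. T' \<subseteq> T \<and> T' \<noteq> {} \<longrightarrow> (\<exists>i<k. gf2_sum T' (\<lambda>j. g i j)))"

definition col_rank :: "nat \<Rightarrow> (nat \<Rightarrow> nat \<Rightarrow> bool) \<Rightarrow> nat set \<Rightarrow> nat" where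
  "col_rank k g A = Max {card T | T. T \<subseteq> A \<and> cols_indep k g T}"

text \<open>Un-normalized information function: sum over all m-subsets of the n columns of the
  rank of the corresponding submatrix.\<close>
definition info_fun :: "nat \<Rightarrow> nat \<Rightarrow> (nat \<Rightarrow> nat \<Rightarrow> bool) \<Rightarrow> nat \<Rightarrow> real" where
  "info_fun n k g m = (\<Sum>A | A \<subseteq> {..<n} \<and> card A = m. real (col_rank k g A))"

text \<open>Codes indexed by a finite index set H: code h has length nn h, generator gen h,
  probability Lam h; all have dimension k.\<close>
definition avg_len :: "nat set \<Rightarrow> (nat \<Rightarrow> real) \<Rightarrow> (nat \<Rightarrow> nat) \<Rightarrow> real" where
  "avg_len H Lam nn = (\<Sum>h\<in>H. Lam h * real (nn h))"

definition rate :: "nat set \<Rightarrow> (nat \<Rightarrow> real) \<Rightarrow> (nat \<Rightarrow> nat) \<Rightarrow> nat \<Rightarrow> real" where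
  "rate H Lam nn k = real k / avg_len H Lam nn"

primrec pseq :: "nat set \<Rightarrow> (nat \<Rightarrow> real) \<Rightarrow> (nat \<Rightarrow> nat) \<Rightarrow> (nat \<Rightarrow> nat \<Rightarrow> nat \<Rightarrow> bool)
    \<Rightarrow> nat \<Rightarrow> real \<Rightarrow> nat \<Rightarrow> real" where
  "pseq H Lam nn gen k G 0 = 1 - exp (- G / rate H Lam nn k)"
| "pseq H Lam nn gen k G (Suc l) =
     (let p = pseq H Lam nn gen k G l in
      1 - exp (- (G / real k) *
        (\<Sum>h\<in>H. Lam h *
          (\<Sum>t<nn h. p ^ t * (1 - p) ^ (nn h - 1 - t) *
             (real (nn h - t) * info_fun (nn h) k (gen h) (nn h - t)
              - real (t + 1) * info_fun (nn h) k (gen h) (nn h - 1 - t))))))"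

definition threshold :: "nat set \<Rightarrow> (nat \<Rightarrow> real) \<Rightarrow> (nat \<Rightarrow> nat) \<Rightarrow> (nat \<Rightarrow> nat \<Rightarrow> nat \<Rightarrow> bool)
    \<Rightarrow> nat \<Rightarrow> real" where
  "threshold H Lam nn gen k = Sup {G. G \<ge> 0 \<and> pseq H Lam nn gen k G \<longlonglongrightarrow> 0}"

end

theory Submission
  imports Defs
begin


lemma card_filter_sum: "finite A \<Longrightarrow> card {x\<in>A. P x} = (\<Sum>x\<in>A. if P x then 1 else (0::nat))"
  by (simp add: sum.If_cases Int_def)

lemma rank_facts:
  assumes "finite A"
  shows "col_rank k g A \<in> {card T | T. T \<subseteq> A \<and> cols_indep k g T}"
    and "\<And>T. T \<subseteq> A \<Longrightarrow> cols_indep k g T \<Longrightarrow> card T \<le> col_rank k g A"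
proof -
  have fin: "finite {card T | T. T \<subseteq> A \<and> cols_indep k g T}"
    by (rule finite_subset[of _ "card ` Pow A"]) (auto simp: assms)
  have ne: "{card T | T. T \<subseteq> A \<and> cols_indep k g T} \<noteq> {}"
    using cols_indep_def by auto
  show "col_rank k g A \<in> {card T | T. T \<subseteq> A \<and> cols_indep k g T}"
    unfolding col_rank_def using Max_in[OF fin ne] .
  fix T assume "T \<subseteq> A" "cols_indep k g T"
  then show "card T \<le> col_rank k g A" unfolding col_rank_def
    using Max_ge[OF fin] by blast
qed

lemma rank_mono: "finite A \<Longrightarrow> B \<subseteq> A \<Longrightarrow> col_rank k g B \<le> col_rank k g A"
proof -
  assume f: "finite A" and s: "B \<subseteq> A"
  from rank_facts(1)[OF finite_subset[OF s f], of k g] obtain T where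
    "T \<subseteq> B" "cols_indep k g T" "col_rank k g B = card T" by auto
  then show ?thesis using rank_facts(2)[OF f, of T k g] s by auto
qed

lemma indep_insert:
  assumes ind: "cols_indep k g T" and T: "T \<subseteq> {..<n} - {i,j}" and S: "S \<subseteq> {..<k}"
    and cw: "\<And>x. x < n \<Longrightarrow> (codeword n g S x \<longleftrightarrow> x = i \<or> x = j)"
    and j: "j < n" and ij: "i \<noteq> j"
  shows "cols_indep k g (insert j T)"
  unfolding cols_indep_def
proof (intro allI impI)
  fix T' assume T': "T' \<subseteq> insert j T \<and> T' \<noteq> {}"
  have finT': "finite T'" using T' T by (meson finite_insert finite_lessThan finite_subset subset_insert_iff Diff_subset)
  have finS: "finite S" using S finite_subset by blast
  show "\<exists>i<k. gf2_sum T' (\<lambda>j. g i j)"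
  proof (cases "j \<in> T'")
    case False
    then have "T' \<subseteq> T" using T' by auto
    then show ?thesis using ind T' unfolding cols_indep_def by blast
  next
    case True
    show ?thesis
    proof (rule ccontr)
      assume "\<not> ?thesis"
      then have ev: "\<And>i'. i' \<in> S \<Longrightarrow> even (card {x\<in>T'. g i' x})"
        using S unfolding gf2_sum_def by auto
      have e1: "even (\<Sum>i'\<in>S. card {x\<in>T'. g i' x})"
      proof -
        have eq: "{a\<in>S. odd (card {x\<in>T'. g a x})} = {}" using ev by auto
        show ?thesis unfolding even_sum_iff[OF finS] eq by simp
      qed
      have "{x\<in>T'. odd (card {i'\<in>S. g i' x})} = {j}"
      proof -
        have "odd (card {i'\<in>S. g i' x}) \<longleftrightarrow> x = j" if "x \<in> T'" for x
        proof -
          have "x < n" using that T' T j by auto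
          then have "codeword n g S x \<longleftrightarrow> x = j" using cw that T' T by auto
          then show ?thesis using \<open>x < n\<close> unfolding codeword_def gf2_sum_def by simp
        qed
        then show ?thesis using True by auto
      qed
      then have o2: "odd (\<Sum>x\<in>T'. card {i'\<in>S. g i' x})"
        by (subst even_sum_iff[OF finT']) auto
      have "(\<Sum>i'\<in>S. card {x\<in>T'. g i' x}) = (\<Sum>x\<in>T'. card {i'\<in>S. g i' x})"
        using finS finT' by (simp add: card_filter_sum sum.swap[of _ S])
      then show False using e1 o2 by simp
    qed
  qed
qed

lemma rank_step:
  assumes S: "S \<subseteq> {..<k}" and cw: "\<And>x. x < n \<Longrightarrow> (codeword n g S x \<longleftrightarrow> x = i \<or> x = j)"
    and i: "i < n" and j: "j < n" and ij: "i \<noteq> j"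
  shows "col_rank k g ({..<n} - {i} - {j}) + 1 \<le> col_rank k g ({..<n} - {i})"
proof -
  from rank_facts(1)[of "{..<n} - {i} - {j}" k g] obtain T where
    T: "T \<subseteq> {..<n} - {i} - {j}" "cols_indep k g T" "col_rank k g ({..<n} - {i} - {j}) = card T" by auto
  have "cols_indep k g (insert j T)"
    by (rule indep_insert[OF T(2) _ S cw j ij]) (use T in auto)
  moreover have "insert j T \<subseteq> {..<n} - {i}" using T j ij by auto
  ultimately have "card (insert j T) \<le> col_rank k g ({..<n} - {i})"
    using rank_facts(2)[of "{..<n} - {i}"] by auto
  moreover have "card (insert j T) = card T + 1" using T
    by (subst card_insert_disjoint) (auto intro: finite_subset)
  ultimately show ?thesis using T by simp
qed



lemma info_identity:
  assumes m1: "1 \<le> m" and mn: "m \<le> n"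
  shows "real m * info_fun n k g m - real (n - m + 1) * info_fun n k g (m - 1) =
    (\<Sum>j<n. \<Sum>A\<in>{A. A \<subseteq> {..<n} \<and> card A = m \<and> j \<in> A}.
        (real (col_rank k g A) - real (col_rank k g (A - {j}))))"
proof -
  let ?r = "\<lambda>A. real (col_rank k g A)"
  define F where "F = (\<lambda>m. {A. A \<subseteq> {..<n} \<and> card A = m})"
  have finF: "finite (F m')" for m' unfolding F_def
    by (rule finite_subset[of _ "Pow {..<n}"]) auto
  have i1: "real m * info_fun n k g m = (\<Sum>j<n. \<Sum>A\<in>{A. A \<subseteq> {..<n} \<and> card A = m \<and> j \<in> A}. ?r A)"
  proof -
    have "real m * info_fun n k g m = (\<Sum>A\<in>F m. real (card A) * ?r A)"
      unfolding info_fun_def F_def by (simp add: sum_distrib_left)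
    also have "\<dots> = (\<Sum>A\<in>F m. \<Sum>j\<in>{j\<in>{..<n}. j \<in> A}. ?r A)"
    proof (rule sum.cong[OF refl])
      fix A assume "A \<in> F m"
      then have "{j\<in>{..<n}. j \<in> A} = A" unfolding F_def by auto
      then show "real (card A) * ?r A = (\<Sum>j\<in>{j\<in>{..<n}. j \<in> A}. ?r A)" by simp
    qed
    also have "\<dots> = (\<Sum>j<n. \<Sum>A\<in>{A\<in>F m. j \<in> A}. ?r A)"
      by (rule sum.swap_restrict[OF finF finite_lessThan])
    also have "\<dots> = (\<Sum>j<n. \<Sum>A\<in>{A. A \<subseteq> {..<n} \<and> card A = m \<and> j \<in> A}. ?r A)"
      unfolding F_def by (intro sum.cong refl) (auto)
    finally show ?thesis .
  qed
  have i2: "real (n - m + 1) * info_fun n k g (m - 1) = (\<Sum>j<n. \<Sum>A\<in>{A. A \<subseteq> {..<n} \<and> card A = m \<and> j \<in> A}. ?r (A - {j}))"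
  proof -
    have "real (n - m + 1) * info_fun n k g (m - 1) = (\<Sum>B\<in>F (m - 1). real (card ({..<n} - B)) * ?r B)"
      unfolding info_fun_def F_def sum_distrib_left
    proof (intro sum.cong refl)
      fix B assume "B \<in> {A. A \<subseteq> {..<n} \<and> card A = m - 1}"
      then have "card ({..<n} - B) = n - m + 1" using m1 mn
        by (subst card_Diff_subset) (auto intro: finite_subset)
      then show "real (n - m + 1) * ?r B = real (card ({..<n} - B)) * ?r B" by simp
    qed
    also have "\<dots> = (\<Sum>B\<in>F (m - 1). \<Sum>j\<in>{j\<in>{..<n}. j \<notin> B}. ?r B)"
      by (intro sum.cong refl) (simp add: set_diff_eq)
    also have "\<dots> = (\<Sum>j<n. \<Sum>B\<in>{B\<in>F (m - 1). j \<notin> B}. ?r B)"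
      by (rule sum.swap_restrict[OF finF finite_lessThan])
    also have "\<dots> = (\<Sum>j<n. \<Sum>A\<in>{A. A \<subseteq> {..<n} \<and> card A = m \<and> j \<in> A}. ?r (A - {j}))"
    proof (rule sum.cong[OF refl])
      fix j assume j: "j \<in> {..<n}"
      have bij: "bij_betw (\<lambda>A. A - {j}) {A. A \<subseteq> {..<n} \<and> card A = m \<and> j \<in> A} {B\<in>F (m - 1). j \<notin> B}"
      proof (rule bij_betw_byWitness[where f'="insert j"])
        show "\<forall>A\<in>{A. A \<subseteq> {..<n} \<and> card A = m \<and> j \<in> A}. insert j (A - {j}) = A" by auto
        show "\<forall>B\<in>{B\<in>F (m - 1). j \<notin> B}. insert j B - {j} = B" by auto
        show "(\<lambda>A. A - {j}) ` {A. A \<subseteq> {..<n} \<and> card A = m \<and> j \<in> A} \<subseteq> {B\<in>F (m - 1). j \<notin> B}"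
          unfolding F_def by (auto intro: finite_subset)
        show "insert j ` {B\<in>F (m - 1). j \<notin> B} \<subseteq> {A. A \<subseteq> {..<n} \<and> card A = m \<and> j \<in> A}"
          unfolding F_def using j m1 
        proof (clarsimp)
          fix B assume "B \<subseteq> {..<n}" "card B = m - Suc 0" "j \<notin> B"
          then show "card (insert j B) = m" using m1 finite_subset[OF \<open>B \<subseteq> {..<n}\<close>] by simp
        qed
      qed
      show "(\<Sum>B\<in>{B\<in>F (m - 1). j \<notin> B}. ?r B) = (\<Sum>A\<in>{A. A \<subseteq> {..<n} \<and> card A = m \<and> j \<in> A}. ?r (A - {j}))"
        using sum.reindex_bij_betw[OF bij, of ?r] by simp
    qed
    finally show ?thesis .
  qed
  show ?thesis unfolding i1 i2 by (simp add: sum_subtractf)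
qed



lemma coef_nonneg:
  assumes "t < n"
  shows "0 \<le> real (n - t) * info_fun n k g (n - t) - real (t + 1) * info_fun n k g (n - 1 - t)"
proof -
  have e: "n - (n - t) + 1 = t + 1" "n - t - 1 = n - 1 - t" using assms by auto
  have "real (n - t) * info_fun n k g (n - t) - real (t + 1) * info_fun n k g (n - 1 - t) =
    (\<Sum>j<n. \<Sum>A\<in>{A. A \<subseteq> {..<n} \<and> card A = n - t \<and> j \<in> A}.
        (real (col_rank k g A) - real (col_rank k g (A - {j}))))"
    using info_identity[of "n - t" n k g] assms unfolding e by simp
  also have "\<dots> \<ge> 0"
    by (intro sum_nonneg) (auto intro!: rank_mono intro: finite_subset)
  finally show ?thesis by simp
qed

lemma code_cw: "c \<in> code n k g \<Longrightarrow> \<exists>S\<subseteq>{..<k}. c = codeword n g S"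
  unfolding code_def by auto

lemma cw_lt: "codeword n g S x \<Longrightarrow> x < n"
  unfolding codeword_def by auto

lemma code_finite: "finite (code n k g)"
proof -
  have "code n k g = (\<lambda>S. codeword n g S) ` Pow {..<k}" unfolding code_def by auto
  then show ?thesis by simp
qed

lemma coef1:
  assumes n2: "2 \<le> n"
  shows "2 * real (B2 n k g) \<le> real (n - 1) * info_fun n k g (n - 1) - real (1 + 1) * info_fun n k g (n - 1 - 1)"
proof -
  define W where "W = {c\<in>code n k g. hweight n c = 2}"
  define d where "d = (\<lambda>j A. real (col_rank k g A) - real (col_rank k g (A - {j})))"
  define Fj where "Fj = (\<lambda>j. {A. A \<subseteq> {..<n} \<and> card A = n - 1 \<and> j \<in> A})"
  define E where "E = (\<lambda>c::nat\<Rightarrow>bool. {(j,i). i \<noteq> j \<and> c i \<and> c j})"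
  define P where "P = (\<Union>c\<in>W. E c)"
  have finW: "finite W" unfolding W_def using code_finite by auto
  have inW: "c \<in> code n k g" "card {x. x < n \<and> c x} = 2" "\<And>x. c x \<Longrightarrow> x < n" if "c \<in> W" for c
    using that unfolding W_def hweight_def by (auto dest: code_cw cw_lt)
  have supp: "{x. x < n \<and> c x} = {i, j}" if "c \<in> W" "i \<noteq> j" "c i" "c j" for c i j
  proof -
    have "{i, j} \<subseteq> {x. x < n \<and> c x}" using that inW[OF that(1)] by auto
    then show ?thesis using inW(2)[OF that(1)] that(2)
      by (intro card_subset_eq[symmetric]) auto
  qed
  have uniq: "c = c'" if "c \<in> W" "c' \<in> W" "i \<noteq> j" "c i" "c j" "c' i" "c' j" for c c' i j
  proof
    fix x
    have "c x \<longleftrightarrow> x \<in> {x. x < n \<and> c x}" using inW[OF that(1)] by auto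
    also have "\<dots> \<longleftrightarrow> x \<in> {x. x < n \<and> c' x}" using supp[of c i j] supp[of c' i j] that by simp
    also have "\<dots> \<longleftrightarrow> c' x" using inW[OF that(2)] by auto
    finally show "c x = c' x" .
  qed
  have cardE: "card (E c) = 2" if cW: "c \<in> W" for c
  proof -
    obtain a b where ab: "{x. x < n \<and> c x} = {a, b}" "a \<noteq> b"
      using inW(2)[OF cW] by (auto simp: card_2_iff)
    have "c x \<longleftrightarrow> x = a \<or> x = b" for x using ab(1) inW(3)[OF cW] by blast
    then have "E c = {(a,b),(b,a)}" unfolding E_def using ab(2) by auto
    then show ?thesis using ab(2) by simp
  qed
  have finE: "finite (E c)" if "c \<in> W" for c using cardE[OF that] by (metis card.infinite zero_neq_numeral)
  have cardP: "card P = 2 * card W"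
  proof -
    have "card P = (\<Sum>c\<in>W. card (E c))" unfolding P_def
    proof (rule card_UN_disjoint[OF finW])
      show "\<forall>c\<in>W. finite (E c)" using finE by blast
      show "\<forall>c\<in>W. \<forall>c'\<in>W. c \<noteq> c' \<longrightarrow> E c \<inter> E c' = {}"
        unfolding E_def using uniq by blast
    qed
    then show ?thesis using cardE by simp
  qed
  have B2eq: "B2 n k g = card W" unfolding B2_def W_def by simp
  have e: "n - (n - 1) + 1 = 1 + 1" "n - 1 - 1 = n - 1 - 1" using n2 by auto
  have "real (card P) = (\<Sum>(j,i)\<in>P. 1)" by simp
  also have "\<dots> \<le> (\<Sum>(j,i)\<in>P. d j ({..<n} - {i}))"
  proof (rule sum_mono, clarify)
    fix j i assume "(j,i) \<in> P"
    then obtain c where c: "c \<in> W" "i \<noteq> j" "c i" "c j" unfolding P_def E_def by auto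
    obtain S where S: "S \<subseteq> {..<k}" "c = codeword n g S" using code_cw inW(1)[OF c(1)] by blast
    have "i < n" "j < n" using inW(3) c by auto
    have cw: "codeword n g S x \<longleftrightarrow> x = i \<or> x = j" if "x < n" for x
      using supp[OF c] that S(2) by blast
    have "col_rank k g ({..<n} - {i} - {j}) + 1 \<le> col_rank k g ({..<n} - {i})"
      by (rule rank_step[OF S(1) cw \<open>i<n\<close> \<open>j<n\<close> c(2)])
    then show "1 \<le> d j ({..<n} - {i})" unfolding d_def by simp
  qed
  also have "\<dots> = (\<Sum>(j,A)\<in>(\<lambda>(j,i). (j, {..<n} - {i})) ` P. d j A)"
  proof (subst sum.reindex)
    show "inj_on (\<lambda>(j,i). (j, {..<n} - {i})) P"
    proof (rule inj_onI)
      fix x y assume x: "x \<in> P" and y: "y \<in> P" and eq: "(case x of (j,i) \<Rightarrow> (j, {..<n} - {i})) = (case y of (j,i) \<Rightarrow> (j, {..<n} - {i}))"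
      obtain j i where xx: "x = (j,i)" by (cases x)
      obtain j' i' where yy: "y = (j',i')" by (cases y)
      have "i < n" "i' < n" using x y xx yy unfolding P_def E_def using inW(3) by auto
      moreover have "j = j'" "{..<n} - {i} = {..<n} - {i'}" using eq xx yy by auto
      ultimately show "x = y" using xx yy by blast
    qed
  qed (simp add: case_prod_beta)
  also have "\<dots> \<le> (\<Sum>(j,A)\<in>Sigma {..<n} Fj. d j A)"
  proof (rule sum_mono2)
    show "finite (Sigma {..<n} Fj)"
      by (rule finite_SigmaI) (auto simp: Fj_def intro: finite_subset[of _ "Pow {..<n}"])
    show "(\<lambda>(j,i). (j, {..<n} - {i})) ` P \<subseteq> Sigma {..<n} Fj"
    proof
      fix x assume "x \<in> (\<lambda>(j,i). (j, {..<n} - {i})) ` P"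
      then obtain j i c where "c \<in> W" "i \<noteq> j" "c i" "c j" "x = (j, {..<n} - {i})"
        unfolding P_def E_def by auto
      moreover have "i < n" "j < n" using inW(3) calculation by auto
      ultimately show "x \<in> Sigma {..<n} Fj" unfolding Fj_def by auto
    qed
    show "0 \<le> (case x of (j, A) \<Rightarrow> d j A)" if "x \<in> Sigma {..<n} Fj - (\<lambda>(j,i). (j, {..<n} - {i})) ` P" for x
      using that unfolding Fj_def d_def by (auto intro!: rank_mono dest: finite_subset[OF _ finite_lessThan])
  qed
  also have "(\<Sum>(j,A)\<in>Sigma {..<n} Fj. d j A) = (\<Sum>j<n. \<Sum>A\<in>Fj j. d j A)"
    apply (rule sym)
    by (rule sum.Sigma) (auto simp: Fj_def intro: finite_subset[of _ "Pow {..<n}"])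
  also have "\<dots> = real (n - 1) * info_fun n k g (n - 1) - real (1 + 1) * info_fun n k g (n - 1 - 1)"
    apply (rule sym)
    using info_identity[of "n - 1" n k g] n2 unfolding Fj_def d_def by (simp add: e)
  finally have "real (card P) \<le> real (n - 1) * info_fun n k g (n - 1) - real (1 + 1) * info_fun n k g (n - 1 - 1)" .
  then show ?thesis using cardP B2eq by simp
qed



lemma B2_small: "n < 2 \<Longrightarrow> B2 n k g = 0"
proof -
  assume n: "n < 2"
  have "hweight n c \<le> n" for c unfolding hweight_def
    by (rule order_trans[OF card_mono[of "{..<n}"]]) auto
  then have eq: "{c \<in> code n k g. hweight n c = 2} = {}" using n by (metis (mono_tags, lifting) empty_Collect_eq leD)
  show ?thesis unfolding B2_def eq by (rule card.empty)
qed

lemma gen_len: "is_generator n k g \<Longrightarrow> 0 < k \<Longrightarrow> 1 \<le> n"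
proof -
  assume g: "is_generator n k g" and k: "0 < k"
  have "{0} \<subseteq> {..<k} \<and> {0::nat} \<noteq> {}" using k by simp
  then obtain j where "j < n" using g unfolding is_generator_def by blast
  then show "1 \<le> n" by simp
qed

lemma main_bound:
  assumes finH: "finite H" and k0: "0 < k" and Lnn: "\<forall>h\<in>H. Lam h \<ge> 0" and sL: "sum Lam H = 1"
    and gen: "\<forall>h\<in>H. is_generator (nn h) k (gen h)"
    and Bdef: "B = (\<Sum>h | h \<in> H \<and> min_dist (nn h) k (gen h) = 2. Lam h * real (B2 (nn h) k (gen h)))"
    and Bpos: "0 < B" and G0: "0 \<le> G" and lim: "pseq H Lam nn gen k G \<longlonglongrightarrow> 0"
  shows "G \<le> real k / (2 * B)"
proof (rule ccontr)
  assume "\<not> ?thesis"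
  then have Gbig: "real k / (2 * B) < G" by simp
  define a where "a = G * 2 * B / real k"
  have "real k < G * (2 * B)" using Gbig Bpos by (simp add: pos_divide_less_eq)
  then have a1: "1 < a" using k0 unfolding a_def by (simp add: pos_less_divide_eq mult.assoc)
  have "0 \<le> real k / (2 * B)" using Bpos by simp
  then have Gpos: "0 < G" using Gbig by linarith
  define N where "N = (\<Sum>h\<in>H. nn h)"
  have nnN: "nn h \<le> N" if "h \<in> H" for h unfolding N_def by (rule member_le_sum[OF that]) (auto simp: finH)
  define c where "c = (\<lambda>h t. real (nn h - t) * info_fun (nn h) k (gen h) (nn h - t)
              - real (t + 1) * info_fun (nn h) k (gen h) (nn h - 1 - t))"
  define S where "S = (\<lambda>p. \<Sum>h\<in>H. Lam h *
          (\<Sum>t<nn h. p ^ t * (1 - p) ^ (nn h - 1 - t) * c h t))"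
  have pstep: "pseq H Lam nn gen k G (Suc l) = 1 - exp (- (G / real k) * S (pseq H Lam nn gen k G l))" for l
    unfolding pseq.simps Let_def S_def c_def by (rule refl)
  have inner: "2 * real (B2 (nn h) k (gen h)) * (p * (1 - p) ^ N) \<le> (\<Sum>t<nn h. p ^ t * (1 - p) ^ (nn h - 1 - t) * c h t)"
    if h: "h \<in> H" and p: "0 \<le> p" "p \<le> 1" for h p
  proof (cases "2 \<le> nn h")
    case True
    have tn: "0 \<le> p ^ t * (1 - p) ^ (nn h - 1 - t) * c h t" if "t < nn h" for t
      using coef_nonneg[OF that, of k "gen h"] p unfolding c_def by simp
    have "2 * real (B2 (nn h) k (gen h)) * (p * (1 - p) ^ N) \<le> c h 1 * (p * (1 - p) ^ (nn h - 1 - 1))"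
    proof (rule mult_mono)
      show "2 * real (B2 (nn h) k (gen h)) \<le> c h 1" unfolding c_def using coef1[OF True] by simp
      show "p * (1 - p) ^ N \<le> p * (1 - p) ^ (nn h - 1 - 1)"
        using p nnN[OF h] by (intro mult_left_mono power_decreasing) auto
      show "0 \<le> c h 1" unfolding c_def using coef_nonneg[of 1 "nn h" k "gen h"] True by simp
      show "0 \<le> p * (1 - p) ^ N" using p by simp
    qed
    also have "\<dots> = p ^ 1 * (1 - p) ^ (nn h - 1 - 1) * c h 1" by simp
    also have "\<dots> \<le> (\<Sum>t<nn h. p ^ t * (1 - p) ^ (nn h - 1 - t) * c h t)"
      by (rule member_le_sum[where f="\<lambda>t. p ^ t * (1 - p) ^ (nn h - 1 - t) * c h t"]) (use True tn in auto)
    finally show ?thesis .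
  next
    case False
    then have "B2 (nn h) k (gen h) = 0" by (intro B2_small) simp
    moreover have "0 \<le> (\<Sum>t<nn h. p ^ t * (1 - p) ^ (nn h - 1 - t) * c h t)"
      using coef_nonneg p unfolding c_def by (intro sum_nonneg) simp
    ultimately show ?thesis by simp
  qed
  have LB: "2 * B * (p * (1 - p) ^ N) \<le> S p" if p: "0 \<le> p" "p \<le> 1" for p
  proof -
    let ?H2 = "{h. h \<in> H \<and> min_dist (nn h) k (gen h) = 2}"
    have "2 * B * (p * (1 - p) ^ N) = (\<Sum>h\<in>?H2. Lam h * (2 * real (B2 (nn h) k (gen h)) * (p * (1 - p) ^ N)))"
      unfolding Bdef sum_distrib_left sum_distrib_right by (intro sum.cong) auto
    also have "\<dots> \<le> (\<Sum>h\<in>H. Lam h * (2 * real (B2 (nn h) k (gen h)) * (p * (1 - p) ^ N)))"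
      using finH Lnn p by (intro sum_mono2) auto
    also have "\<dots> \<le> S p" unfolding S_def
      using inner p Lnn by (intro sum_mono mult_left_mono) auto
    finally show ?thesis .
  qed
  define \<delta> where "\<delta> = (a - 1) / (a * (real N + 1))"
  have dpos: "0 < \<delta>" unfolding \<delta>_def using a1 by simp
  have d1: "\<delta> < 1"
  proof -
    have "0 \<le> a * real N" using a1 by simp
    then have "a - 1 < a * (real N + 1)" by (simp add: algebra_simps)
    moreover have "0 < a * (real N + 1)" using a1 by simp
    ultimately show ?thesis unfolding \<delta>_def by (simp add: pos_divide_less_eq)
  qed
  have F: "p < 1 - exp (- (G / real k) * S p)" if p: "0 < p" "p < \<delta>" for p
  proof -
    have p1: "p < 1" using p d1 by simp
    define y where "y = a * (p * (1 - p) ^ N)"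
    have "y \<le> (G / real k) * S p"
    proof -
      have "y = (G / real k) * (2 * B * (p * (1 - p) ^ N))" unfolding y_def a_def by simp
      also have "\<dots> \<le> (G / real k) * S p" using LB[of p] p p1 Gpos by (intro mult_left_mono) auto
      finally show ?thesis .
    qed
    have y0: "0 \<le> y" unfolding y_def using a1 p p1 by simp
    have bern: "1 - real N * p \<le> (1 - p) ^ N"
      using Bernoulli_inequality[of "-p" N] p1 by simp
    have "a * p * (1 - (real N + 1) * p) > p"
    proof -
      have "0 < a * (real N + 1)" using a1 by simp
      then have "p * (a * (real N + 1)) < a - 1" using p(2) unfolding \<delta>_def
        by (simp add: pos_less_divide_eq)
      then have "1 < a * (1 - (real N + 1) * p)" by (simp add: algebra_simps)
      then have "p * 1 < p * (a * (1 - (real N + 1) * p))" using p(1) by (rule mult_strict_left_mono)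
      then show ?thesis by (simp add: algebra_simps)
    qed
    also have "a * p * (1 - (real N + 1) * p) \<le> a * p * ((1 - real N * p) * (1 - p))"
    proof (rule mult_left_mono)
      have "(1 - real N * p) * (1 - p) = 1 - (real N + 1) * p + real N * (p * p)"
        by (simp add: algebra_simps)
      moreover have "0 \<le> real N * (p * p)" by simp
      ultimately show "1 - (real N + 1) * p \<le> (1 - real N * p) * (1 - p)" by linarith
      show "0 \<le> a * p" using a1 p by simp
    qed
    also have "\<dots> \<le> y * (1 - p)"
    proof -
      have "(1 - real N * p) * (1 - p) \<le> (1 - p) ^ N * (1 - p)"
        using bern p1 by (intro mult_right_mono) auto
      moreover have "0 \<le> a * p" using a1 p by simp
      ultimately have "a * p * ((1 - real N * p) * (1 - p)) \<le> a * p * ((1 - p) ^ N * (1 - p))"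
        by (rule mult_left_mono)
      then show ?thesis by (simp add: y_def mult.assoc)
    qed
    finally have yp: "p < y * (1 - p)" .
    have "exp (- (G / real k) * S p) \<le> exp (- y)" using \<open>y \<le> _\<close> by simp
    also have "exp (- y) \<le> 1 / (1 + y)"
    proof -
      have "1 + y \<le> exp y" by (rule exp_ge_add_one_self)
      then have "1 / exp y \<le> 1 / (1 + y)" using y0 by (intro divide_left_mono) auto
      then show ?thesis by (simp add: exp_minus inverse_eq_divide)
    qed
    finally have "1 - 1 / (1 + y) \<le> 1 - exp (- (G / real k) * S p)" by simp
    moreover have "p < 1 - 1 / (1 + y)"
    proof -
      have "1 - 1 / (1 + y) = y / (1 + y)" using y0 by (simp add: field_simps)
      moreover have "p * (1 + y) < y" using yp by (simp add: algebra_simps)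
      ultimately show ?thesis using y0 by (simp add: pos_less_divide_eq)
    qed
    ultimately show ?thesis by simp
  qed
  have nn1: "1 \<le> nn h" if "h \<in> H" for h using gen_len gen that k0 by blast
  have avg: "0 < avg_len H Lam nn"
  proof -
    have "(\<Sum>h\<in>H. Lam h * 1) \<le> avg_len H Lam nn" unfolding avg_len_def
      using nn1 Lnn by (intro sum_mono mult_left_mono) auto
    then show ?thesis using sL by simp
  qed
  have pos: "0 < pseq H Lam nn gen k G l \<and> pseq H Lam nn gen k G l < 1" for l
  proof (induction l)
    case 0
    have "0 < G / rate H Lam nn k" unfolding rate_def using Gpos avg k0 by simp
    then show ?case by simp
  next
    case (Suc l)
    let ?p = "pseq H Lam nn gen k G l"
    have "0 < 2 * B * (?p * (1 - ?p) ^ N)" using Suc Bpos by simp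
    also have "\<dots> \<le> S ?p" using LB Suc by simp
    finally have "0 < G / real k * S ?p" using Gpos k0 by simp
    then show ?case unfolding pstep by simp
  qed
  obtain L where L: "\<And>l. l \<ge> L \<Longrightarrow> pseq H Lam nn gen k G l < \<delta>"
  proof -
    have "\<forall>\<^sub>F l in sequentially. pseq H Lam nn gen k G l < \<delta>"
      using order_tendstoD(2)[OF lim dpos] .
    then show ?thesis using that unfolding eventually_sequentially by blast
  qed
  have mono: "pseq H Lam nn gen k G L \<le> pseq H Lam nn gen k G l" if "l \<ge> L" for l
    using that
  proof (induction l rule: dec_induct)
    case base then show ?case by simp
  next
    case (step m)
    have "pseq H Lam nn gen k G m < pseq H Lam nn gen k G (Suc m)"
      unfolding pstep using F pos L step.hyps(1) by blast
    then show ?case using step.IH by simp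
  qed
  have "pseq H Lam nn gen k G L \<le> 0"
    by (rule LIMSEQ_le_const[OF lim]) (use mono in blast)
  then show False using pos[of L] by simp
qed



lemma B2_pos:
  assumes g: "is_generator n k g" and k: "0 < k" and md: "min_dist n k g = 2"
  shows "0 < B2 n k g"
proof -
  let ?D = "{hweight n c | c. c \<in> code n k g \<and> c \<noteq> (\<lambda>_. False)}"
  have fin: "finite ?D"
    by (rule finite_subset[of _ "hweight n ` code n k g"]) (auto simp: code_finite)
  have "{0} \<subseteq> {..<k} \<and> {0::nat} \<noteq> {}" using k by simp
  then obtain j where j: "j < n" "gf2_sum {0} (\<lambda>i. g i j)" using g unfolding is_generator_def by blast
  have "codeword n g {0} \<in> code n k g" unfolding code_def using k by auto
  moreover have "codeword n g {0} \<noteq> (\<lambda>_. False)"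
  proof
    assume "codeword n g {0} = (\<lambda>_. False)"
    then have "codeword n g {0} j = False" by simp
    then show False using j unfolding codeword_def by simp
  qed
  ultimately have ne: "?D \<noteq> {}" by blast
  have "Min ?D \<in> ?D" using Min_in[OF fin ne] .
  then obtain c where c: "c \<in> code n k g" "hweight n c = 2" using md unfolding min_dist_def by auto
  have "finite {c \<in> code n k g. hweight n c = 2}" using code_finite by auto
  moreover have "{c \<in> code n k g. hweight n c = 2} \<noteq> {}" using c by auto
  ultimately show ?thesis unfolding B2_def by (simp add: card_gt_0_iff)
qed

lemma part1:
  assumes finH: "finite H" and Hne: "H \<noteq> {}" and k0: "k > 0"
      and Lnn: "\<forall>h\<in>H. Lam h \<ge> 0" and sL: "sum Lam H = 1"
      and cond: "\<forall>h\<in>H. is_generator (nn h) k (gen h) \<and> no_idle (nn h) k (gen h)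
                 \<and> min_dist (nn h) k (gen h) \<ge> 2"
      and mn: "Min {min_dist (nn h) k (gen h) | h. h \<in> H \<and> Lam h > 0} = 2"
  shows "threshold H Lam nn gen k
            \<le> real k / (2 * (\<Sum>h | h \<in> H \<and> min_dist (nn h) k (gen h) = 2.
                                  Lam h * real (B2 (nn h) k (gen h))))"
proof -
  define B where "B = (\<Sum>h | h \<in> H \<and> min_dist (nn h) k (gen h) = 2. Lam h * real (B2 (nn h) k (gen h)))"
  have "\<exists>h\<in>H. Lam h > 0"
  proof (rule ccontr)
    assume "\<not> ?thesis"
    then have "sum Lam H \<le> sum (\<lambda>_. 0) H" by (intro sum_mono) auto
    then show False using sL by simp
  qed
  let ?M = "{min_dist (nn h) k (gen h) | h. h \<in> H \<and> Lam h > 0}"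
  have finM: "finite ?M" using finH by simp
  have neM: "?M \<noteq> {}" using \<open>\<exists>h\<in>H. Lam h > 0\<close> by auto
  obtain h0 where h0: "h0 \<in> H" "Lam h0 > 0" "min_dist (nn h0) k (gen h0) = 2"
    using Min_in[OF finM neM] mn by auto
  have "0 < B2 (nn h0) k (gen h0)" using B2_pos cond h0 k0 by blast
  then have "0 < Lam h0 * real (B2 (nn h0) k (gen h0))" using h0 by simp
  also have "\<dots> \<le> B" unfolding B_def
    by (rule member_le_sum) (use h0 Lnn finH in auto)
  finally have Bpos: "0 < B" .
  have z: "pseq H Lam nn gen k 0 l = 0" for l by (induction l) (simp_all add: Let_def)
  have "Sup {G. G \<ge> 0 \<and> pseq H Lam nn gen k G \<longlonglongrightarrow> 0} \<le> real k / (2 * B)"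
  proof (rule cSup_least)
    show "{G. G \<ge> 0 \<and> pseq H Lam nn gen k G \<longlonglongrightarrow> 0} \<noteq> {}"
    proof -
      have "(0::real) \<in> {G. G \<ge> 0 \<and> pseq H Lam nn gen k G \<longlonglongrightarrow> 0}"
      proof -
        have "pseq H Lam nn gen k 0 = (\<lambda>l. 0)" using z by (simp add: fun_eq_iff)
        then show ?thesis by simp
      qed
      then show ?thesis by blast
    qed
    fix G assume "G \<in> {G. G \<ge> 0 \<and> pseq H Lam nn gen k G \<longlonglongrightarrow> 0}"
    then show "G \<le> real k / (2 * B)"
      using main_bound[OF finH k0 Lnn sL _ B_def Bpos] cond by auto
  qed
  then show ?thesis unfolding threshold_def B_def .
qed

lemma rep_code: "code h (Suc 0) (\<lambda>i j. True) = {(\<lambda>_. False), (\<lambda>j. j < h)}"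
proof -
  have P: "{S. S \<subseteq> {..<Suc 0}} = {{}, {0}}" by auto
  have "code h (Suc 0) (\<lambda>i j. True) = (\<lambda>S. codeword h (\<lambda>i j. True) S) ` {S. S \<subseteq> {..<Suc 0}}"
    unfolding code_def by auto
  also have "\<dots> = {(\<lambda>_. False), (\<lambda>j. j < h)}" unfolding P
    by (auto simp: codeword_def gf2_sum_def fun_eq_iff)
  finally show ?thesis .
qed

lemma rep_hw: "hweight h (\<lambda>j. j < h) = h"
  unfolding hweight_def by simp

lemma rep_md: "1 \<le> h \<Longrightarrow> min_dist h (Suc 0) (\<lambda>i j. True) = h"
proof -
  assume h: "1 \<le> h"
  have "(\<lambda>j. j < h) \<noteq> (\<lambda>_. False)"
  proof
    assume "(\<lambda>j. j < h) = (\<lambda>_. False)"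
    then have "(0 < h) = False" by metis
    then show False using h by simp
  qed
  note ne = this
  have "{hweight h c | c. c \<in> code h (Suc 0) (\<lambda>i j. True) \<and> c \<noteq> (\<lambda>_. False)} = {h}"
  proof -
    have i: "{hweight h c | c. c \<in> code h (Suc 0) (\<lambda>i j. True) \<and> c \<noteq> (\<lambda>_. False)}
       = hweight h ` {c. c \<in> code h (Suc 0) (\<lambda>i j. True) \<and> c \<noteq> (\<lambda>_. False)}" by blast
    have e: "{c. c \<in> {(\<lambda>_. False), (\<lambda>j. j < h)} \<and> c \<noteq> (\<lambda>_. False)} = {(\<lambda>j. j < h)}"
      using ne by auto
    show ?thesis
    proof (rule set_eqI, rule iffI)
      fix x assume "x \<in> {hweight h c | c. c \<in> code h (Suc 0) (\<lambda>i j. True) \<and> c \<noteq> (\<lambda>_. False)}"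
      then show "x \<in> {h}" using rep_hw[of h] by (auto simp: rep_code)
    next
      fix x assume "x \<in> {h}"
      then show "x \<in> {hweight h c | c. c \<in> code h (Suc 0) (\<lambda>i j. True) \<and> c \<noteq> (\<lambda>_. False)}"
        using ne rep_hw[of h] by (auto simp: rep_code intro!: exI[of _ "\<lambda>j. j < h"])
    qed
  qed
  then show ?thesis unfolding min_dist_def by simp
qed

lemma rep_B2: "B2 2 (Suc 0) (\<lambda>i j. True) = 1"
proof -
  have "{c \<in> code 2 (Suc 0) (\<lambda>i j. True). hweight 2 c = 2} = {(\<lambda>j. j < 2)}"
    unfolding rep_code using rep_hw[of 2] by (auto simp: hweight_def)
  then show ?thesis unfolding B2_def by simp
qed

lemma rep_gen: "1 \<le> h \<Longrightarrow> is_generator h (Suc 0) (\<lambda>i j. True)"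
proof -
  assume h: "1 \<le> h"
  show ?thesis unfolding is_generator_def
  proof (intro allI impI)
    fix S :: "nat set" assume "S \<subseteq> {..<Suc 0} \<and> S \<noteq> {}"
    then have "S = {0}" by auto
    moreover have "(0::nat) < h" using h by simp
    ultimately show "\<exists>j<h. gf2_sum S (\<lambda>i. True)" by (auto simp: gf2_sum_def)
  qed
qed

lemma part2:
  assumes "theta \<ge> 2" "\<forall>h\<in>{2..theta}. Lam h \<ge> 0" "sum Lam {2..theta} = 1"
      "Min {h | h. h \<in> {2..theta} \<and> Lam h > 0} = 2"
  shows "threshold {2..theta} Lam (\<lambda>h. h) (\<lambda>h i j. True) 1 \<le> 1 / (2 * Lam 2)"
proof -
  have md: "min_dist h (Suc 0) (\<lambda>i j. True) = h" if "h \<in> {2..theta}" for h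
    using rep_md that by simp
  have cond: "\<forall>h\<in>{2..theta}. is_generator h 1 (\<lambda>i j. True) \<and> no_idle h 1 (\<lambda>i j. True)
                 \<and> min_dist h 1 (\<lambda>i j. True) \<ge> 2"
    using md rep_gen by (auto simp: no_idle_def)
  have "{min_dist h 1 (\<lambda>i j. True) | h. h \<in> {2..theta} \<and> Lam h > 0} = {h | h. h \<in> {2..theta} \<and> Lam h > 0}"
    using md by force
  then have mn: "Min {min_dist h 1 (\<lambda>i j. True) | h. h \<in> {2..theta} \<and> Lam h > 0} = 2"
    using assms(4) by simp
  have "threshold {2..theta} Lam (\<lambda>h. h) (\<lambda>h i j. True) 1
      \<le> real 1 / (2 * (\<Sum>h | h \<in> {2..theta} \<and> min_dist h 1 (\<lambda>i j. True) = 2.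
                                  Lam h * real (B2 h 1 (\<lambda>i j. True))))"
    using part1[of "{2..theta}" 1 Lam "\<lambda>h. h" "\<lambda>h i j. True"] assms cond mn by auto
  moreover have "{h. h \<in> {2..theta} \<and> min_dist h 1 (\<lambda>i j. True) = 2} = {2}"
    using md assms(1) by auto
  ultimately show ?thesis using rep_B2 by simp
qed

theorem mainTheorem6:
  shows
  "(\<forall>(H::nat set) (Lam::nat \<Rightarrow> real) (nn::nat \<Rightarrow> nat) (gen::nat \<Rightarrow> nat \<Rightarrow> nat \<Rightarrow> bool) (k::nat).
      finite H \<and> H \<noteq> {} \<and> k > 0
      \<and> (\<forall>h\<in>H. Lam h \<ge> 0) \<and> sum Lam H = 1
      \<and> (\<forall>h\<in>H. is_generator (nn h) k (gen h) \<and> no_idle (nn h) k (gen h)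
                 \<and> min_dist (nn h) k (gen h) \<ge> 2)
      \<and> Min {min_dist (nn h) k (gen h) | h. h \<in> H \<and> Lam h > 0} = 2
      \<longrightarrow> threshold H Lam nn gen k
            \<le> real k / (2 * (\<Sum>h | h \<in> H \<and> min_dist (nn h) k (gen h) = 2.
                                  Lam h * real (B2 (nn h) k (gen h)))))
   \<and>
   (\<forall>(theta::nat) (Lam::nat \<Rightarrow> real).
      theta \<ge> 2 \<and> (\<forall>h\<in>{2..theta}. Lam h \<ge> 0) \<and> sum Lam {2..theta} = 1
      \<and> Min {h | h. h \<in> {2..theta} \<and> Lam h > 0} = 2
      \<longrightarrow> threshold {2..theta} Lam (\<lambda>h. h) (\<lambda>h i j. True) 1 \<le> 1 / (2 * Lam 2))"
  using part1 part2 by blast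

end
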